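(* Let $(\mathcal S,\mathcal A,H,P,R,\mu)$ be an episodic tabular MDP as in the context, with non-negative mean rewards $r$, and let $C\ge1$. Assume that for every $(h,s)\in[H]\times\mathcal S$ such that $r_h(s,a)>0$ for some $a$, we have $\min_{a}r_h(s,a)>0$ and $\max_a r_h(s,a)/\min_a r_h(s,a)\le C$. Then $CR^1(P,r)\ge\frac{1}{AC}$.
   Context: Episodic tabular MDP $(\mathcal S,\mathcal A,H,P,R,\mu)$: finite state space $\mathcal S$ with $|\mathcal S|=S$, finite action space $\mathcal A$ with $|\mathcal A|=A$, horizon $H\in\mathbb N$, transition kernels $P_h(\cdot\mid s,a)$, initial state distribution $\mu$, and random non-negative rewards $R_h(s,a)$ for $(h,s,a)\in\mathcal X:=[H]\times\mathcal S\times\mathcal A$. Initially $s_1\sim\mu$; at step $h$ the agent in state $s_h$ picks $a_h$, receives $R_h(s_h,a_h)$ and moves to $s_{h+1}\sim P_h(\cdot\mid s_h,a_h)$. All rewards are drawn before the interaction. The vectors $\mathcal R_h=\{R_h(s,a)\}_{s,a}$ for different $h$ are mutually independent (entries of one $\mathcal R_h$ may be arbitrarily correlated); rewards are independent of transitions, and transitions are independent across steps. Let $r_h(s,a)=\mathbb E[R_h(s,a)]$ and let $\mathcal D(r)$ denote the set of all such reward distributions with means $r$. For $L\in\{0,\dots,H\}$ an $L$-lookahead policy draws $a_h\sim\pi_h(\cdot\mid s_h,\mathcal R_h^L)$, where $\mathcal R_h^L=(\mathcal R_t)_{h\le t\le\min(h+L-1,H)}$ and $\mathcal R_h^0=\emptyset$;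 $\Pi^L$ is the set of these policies. The value is $V^{L,\pi}(P,r)=\mathbb E[\sum_{h=1}^H R_h(s_h,a_h)]$, and $V^{L,*}(P,r)=\sup_{\pi\in\Pi^L}V^{L,\pi}(P,r)$. The competitive ratio is $CR^L(P,r)=\inf_{\mathcal D(r)}V^{0,*}(P,r)/V^{L,*}(P,r)$, with the convention that any division by zero equals $+\infty$. In particular $CR^1$ compares no-lookahead agents to agents that observe the current step's rewards $\mathcal R_h$ before acting. *)

theory Defs
  imports "HOL-Probability.Probability"
begin

(* Reward vectors of one step: R s a.  Their measurable space is the Borel
   sigma-algebra of the (finite) product topology on functions. *)
type_synonym ('s,'a) rvec = "'s \<Rightarrow> 'a \<Rightarrow> real"

(* A (possibly randomised) one-step-lookahead policy: at step h, in state s,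
   having observed the current step's reward vector R_h, draw an action. *)
type_synonym ('s,'a) lpolicy = "nat \<Rightarrow> 's \<Rightarrow> ('s,'a) rvec \<Rightarrow> 'a pmf"

(* Value-to-go with n remaining steps (the current step is h = H - n + 1 when n \<ge> 1).
   Rewards of different steps are independent (D h is the law of R_h), independent
   of the transitions, and the policy at step h only sees s_h and R_h, so the expected
   return is given by this backward recursion. *)
fun qval :: "nat \<Rightarrow> (nat \<Rightarrow> 's \<Rightarrow> 'a \<Rightarrow> 's pmf) \<Rightarrow> (nat \<Rightarrow> ('s,'a) rvec measure)
             \<Rightarrow> ('s::finite,'a::finite) lpolicy \<Rightarrow> nat \<Rightarrow> 's \<Rightarrow> real" where
  "qval H P D \<pi> 0 s = 0"
| "qval H P D \<pi> (Suc n) s =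
     (let h = H - n in
      \<integral>R. (\<Sum>a\<in>UNIV. pmf (\<pi> h s R) a *
              (R s a + (\<Sum>s'\<in>UNIV. pmf (P h s a) s' * qval H P D \<pi> n s'))) \<partial>(D h))"

definition policy_value :: "nat \<Rightarrow> 's pmf \<Rightarrow> (nat \<Rightarrow> 's \<Rightarrow> 'a \<Rightarrow> 's pmf)
     \<Rightarrow> (nat \<Rightarrow> ('s,'a) rvec measure) \<Rightarrow> ('s::finite,'a::finite) lpolicy \<Rightarrow> real" where
  "policy_value H \<mu> P D \<pi> = (\<Sum>s\<in>UNIV. pmf \<mu> s * qval H P D \<pi> H s)"

definition Pi1 :: "nat \<Rightarrow> ('s::finite,'a::finite) lpolicy set" where
  "Pi1 H = {\<pi>. \<forall>h\<in>{1..H}. \<forall>s a. (\<lambda>R. pmf (\<pi> h s R) a) \<in> borel_measurable borel}"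

definition Pi0 :: "nat \<Rightarrow> ('s::finite,'a::finite) lpolicy set" where
  "Pi0 H = {\<pi> \<in> Pi1 H. \<forall>h s R R'. \<pi> h s R = \<pi> h s R'}"

definition opt_value :: "nat \<Rightarrow> 's pmf \<Rightarrow> (nat \<Rightarrow> 's \<Rightarrow> 'a \<Rightarrow> 's pmf)
     \<Rightarrow> (nat \<Rightarrow> ('s,'a) rvec measure) \<Rightarrow> ('s::finite,'a::finite) lpolicy set \<Rightarrow> real" where
  "opt_value H \<mu> P D PS = (SUP \<pi>\<in>PS. policy_value H \<mu> P D \<pi>)"

definition reward_dists :: "nat \<Rightarrow> (nat \<Rightarrow> 's \<Rightarrow> 'a \<Rightarrow> real)
     \<Rightarrow> (nat \<Rightarrow> ('s,'a) rvec measure) set" where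
  "reward_dists H r = {D. \<forall>h\<in>{1..H}.
      prob_space (D h) \<and> sets (D h) = sets borel \<and>
      (AE R in D h. \<forall>s a. 0 \<le> R s a) \<and>
      (\<forall>s a. integrable (D h) (\<lambda>R. R s a) \<and> (\<integral>R. R s a \<partial>(D h)) = r h s a)}"

definition CR1 :: "nat \<Rightarrow> 's::finite pmf \<Rightarrow> (nat \<Rightarrow> 's \<Rightarrow> 'a::finite \<Rightarrow> 's pmf)
     \<Rightarrow> (nat \<Rightarrow> 's \<Rightarrow> 'a \<Rightarrow> real) \<Rightarrow> ereal" where
  "CR1 H \<mu> P r = (INF D\<in>reward_dists H r.
      (let v0 = opt_value H \<mu> P D (Pi0 H :: ('s,'a) lpolicy set);
           v1 = opt_value H \<mu> P D (Pi1 H :: ('s,'a) lpolicy set)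
       in if v1 = 0 then \<infinity> else ereal (v0 / v1)))"

end

theory Submission
  imports Defs
begin

fun Uv :: "nat \<Rightarrow> (nat \<Rightarrow> 's::finite \<Rightarrow> 'a::finite \<Rightarrow> 's pmf) \<Rightarrow> (nat \<Rightarrow> 's \<Rightarrow> 'a \<Rightarrow> real) \<Rightarrow> nat \<Rightarrow> 's \<Rightarrow> real" where
  "Uv H P r 0 s = 0"
| "Uv H P r (Suc n) s = (let h = H - n in
     (\<Sum>a\<in>UNIV. r h s a) + Max (range (\<lambda>a. \<Sum>s'\<in>UNIV. pmf (P h s a) s' * Uv H P r n s')))"

fun Vv :: "nat \<Rightarrow> (nat \<Rightarrow> 's::finite \<Rightarrow> 'a::finite \<Rightarrow> 's pmf) \<Rightarrow> (nat \<Rightarrow> 's \<Rightarrow> 'a \<Rightarrow> real) \<Rightarrow> nat \<Rightarrow> 's \<Rightarrow> real" where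
  "Vv H P r 0 s = 0"
| "Vv H P r (Suc n) s = (let h = H - n in
     Max (range (\<lambda>a. r h s a + (\<Sum>s'\<in>UNIV. pmf (P h s a) s' * Vv H P r n s'))))"

definition gV :: "nat \<Rightarrow> (nat \<Rightarrow> 's::finite \<Rightarrow> 'a::finite \<Rightarrow> 's pmf) \<Rightarrow> (nat \<Rightarrow> 's \<Rightarrow> 'a \<Rightarrow> real) \<Rightarrow> nat \<Rightarrow> 's \<Rightarrow> 'a::finite \<Rightarrow> real" where
  "gV H P r h s a = r h s a + (\<Sum>s'\<in>UNIV. pmf (P h s a) s' * Vv H P r (H - h) s')"

definition pol :: "nat \<Rightarrow> (nat \<Rightarrow> 's \<Rightarrow> 'a \<Rightarrow> 's pmf) \<Rightarrow> (nat \<Rightarrow> 's \<Rightarrow> 'a \<Rightarrow> real) \<Rightarrow> ('s::finite,'a::finite) lpolicy" where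
  "pol H P r h s R = return_pmf (SOME a. \<forall>b. gV H P r h s b \<le> gV H P r h s a)"

lemma Max_range_ge:
  fixes g :: "'a::finite \<Rightarrow> real"
  shows "g b \<le> Max (range g)"
  by (rule Max_ge) auto

lemma Max_range_mono:
  fixes g g' :: "'a::finite \<Rightarrow> real"
  assumes "\<And>a. g a \<le> g' a"
  shows "Max (range g) \<le> Max (range g')"
proof -
  have "g a \<le> Max (range g')" for a
    using assms[of a] Max_range_ge[of g' a] by linarith
  then show ?thesis by (simp add: Max_le_iff)
qed

lemma argmax_ex:
  fixes g :: "'a::finite \<Rightarrow> real"
  shows "\<exists>a. \<forall>b. g b \<le> g a"
proof -
  have "Max (range g) \<in> range g" by (intro Max_in) auto
  then obtain a where "g a = Max (range g)" by (metis imageE)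
  then show ?thesis using Max_range_ge[of g] by metis
qed

lemma pol_max:
  "gV H P r h s (SOME a. \<forall>b. gV H P r h s b \<le> gV H P r h s a) = Max (range (gV H P r h s))"
proof -
  let ?a = "SOME a. \<forall>b. gV H P r h s b \<le> gV H P r h s a"
  have "\<forall>b. gV H P r h s b \<le> gV H P r h s ?a" by (rule someI_ex[OF argmax_ex])
  then show ?thesis
    by (intro antisym) (auto intro!: Max_ge simp: Max_le_iff)
qed


lemma sum_return:
  fixes F :: "'a::finite \<Rightarrow> real"
  shows "(\<Sum>a\<in>UNIV. pmf (return_pmf a0) a * F a) = F a0"
  by (simp add: indicator_def)

lemma qval_pol:
  assumes D: "D \<in> reward_dists H r"
  shows "n \<le> H \<Longrightarrow> qval H P D (pol H P r) n s = Vv H P r n s"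
proof (induction n arbitrary: s)
  case 0 thus ?case by simp
next
  case (Suc n)
  define h where "h = H - n"
  have h: "h \<in> {1..H}" "H - h = n" using Suc.prems h_def by auto
  have ps: "prob_space (D h)" and int: "\<And>s a. integrable (D h) (\<lambda>R. R s a)"
    and mean: "\<And>s a. (\<integral>R. R s a \<partial>D h) = r h s a"
    using D h(1) unfolding reward_dists_def by auto
  define a0 where "a0 = (SOME a. \<forall>b. gV H P r h s b \<le> gV H P r h s a)"
  define c where "c = (\<Sum>s'\<in>UNIV. pmf (P h s a0) s' * Vv H P r n s')"
  have IH: "\<And>s'. qval H P D (pol H P r) n s' = Vv H P r n s'" using Suc by auto
  have "qval H P D (pol H P r) (Suc n) s = (\<integral>R. (R s a0 + c) \<partial>D h)"
    by (simp add: h_def[symmetric] Let_def pol_def a0_def[symmetric] IH c_def sum_return)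
  also have "\<dots> = r h s a0 + c"
  proof -
    interpret prob_space "D h" by (rule ps)
    have "integrable (D h) (\<lambda>R. c)" by simp
    then show ?thesis using int mean Bochner_Integration.integral_add[of "D h" "\<lambda>R. R s a0" "\<lambda>R. c"] prob_space by simp
  qed
  also have "\<dots> = gV H P r h s a0" by (simp add: gV_def h(2) c_def)
  also have "\<dots> = Max (range (gV H P r h s))" unfolding a0_def by (rule pol_max)
  also have "\<dots> = Vv H P r (Suc n) s" by (simp add: Let_def h_def[symmetric] gV_def h(2))
  finally show ?case .
qed


lemma sum_pmf_UNIV: "(\<Sum>a\<in>(UNIV::'a::finite set). pmf p a) = 1"
  by (rule sum_pmf_eq_1) auto

lemma coord_meas: "(\<lambda>R::'s \<Rightarrow> 'a \<Rightarrow> real. R s a) \<in> borel_measurable borel"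
proof -
  have 1: "(\<lambda>R::'s \<Rightarrow> 'a \<Rightarrow> real. R s) \<in> measurable borel borel"
    by (rule measurable_product_coordinates)
  have 2: "(\<lambda>x::'a \<Rightarrow> real. x a) \<in> measurable borel borel"
    by (rule measurable_product_coordinates)
  show ?thesis using measurable_comp[OF 1 2] by (simp add: comp_def)
qed

lemma weighted_le:
  fixes p :: "'a::finite \<Rightarrow> real"
  assumes "\<And>a. 0 \<le> p a" "sum p UNIV = 1" "\<And>a. 0 \<le> x a"
  shows "(\<Sum>a\<in>UNIV. p a * (x a + c a)) \<le> (\<Sum>a\<in>UNIV. x a) + Max (range c)"
proof -
  have p1: "p a \<le> 1" for a
  proof -
    have "p a \<le> sum p UNIV" by (rule member_le_sum) (auto simp: assms)
    then show ?thesis using assms(2) by simp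
  qed
  have "(\<Sum>a\<in>UNIV. p a * (x a + c a)) = (\<Sum>a\<in>UNIV. p a * x a) + (\<Sum>a\<in>UNIV. p a * c a)"
    by (simp add: distrib_left sum.distrib)
  also have "(\<Sum>a\<in>UNIV. p a * x a) \<le> (\<Sum>a\<in>UNIV. x a)"
    by (rule sum_mono) (metis assms(3) mult_left_le_one_le p1 assms(1) mult.commute)
  also have "(\<Sum>a\<in>UNIV. p a * c a) \<le> (\<Sum>a\<in>UNIV. p a * Max (range c))"
    by (rule sum_mono) (simp add: assms(1) mult_left_mono Max_range_ge)
  also have "\<dots> = Max (range c)" by (simp add: sum_distrib_right[symmetric] assms(2))
  finally show ?thesis by simp
qed

lemma abs_weighted_le:
  fixes p :: "'a::finite \<Rightarrow> real"
  assumes "\<And>a. 0 \<le> p a" "\<And>a. p a \<le> 1"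
  shows "\<bar>\<Sum>a\<in>UNIV. p a * (x a + c a)\<bar> \<le> (\<Sum>a\<in>UNIV. \<bar>x a\<bar> + \<bar>c a\<bar>)"
proof -
  have "\<bar>\<Sum>a\<in>UNIV. p a * (x a + c a)\<bar> \<le> (\<Sum>a\<in>UNIV. \<bar>p a * (x a + c a)\<bar>)" by (rule sum_abs)
  also have "\<dots> \<le> (\<Sum>a\<in>UNIV. \<bar>x a\<bar> + \<bar>c a\<bar>)"
  proof (rule sum_mono)
    fix a
    have "\<bar>p a * (x a + c a)\<bar> = p a * \<bar>x a + c a\<bar>" using assms(1)[of a] by (simp add: abs_mult)
    also have "\<dots> \<le> 1 * \<bar>x a + c a\<bar>" by (rule mult_right_mono) (auto simp: assms)
    finally show "\<bar>p a * (x a + c a)\<bar> \<le> \<bar>x a\<bar> + \<bar>c a\<bar>" by simp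
  qed
  finally show ?thesis .
qed

lemma qval_le:
  fixes D :: "nat \<Rightarrow> ('s::finite,'a::finite) rvec measure"
  assumes D: "D \<in> reward_dists H r" and pi: "\<pi> \<in> Pi1 H"
  shows "n \<le> H \<Longrightarrow> qval H P D \<pi> n s \<le> Uv H P r n s"
proof (induction n arbitrary: s)
  case 0 thus ?case by simp
next
  case (Suc n)
  define h where "h = H - n"
  have h: "h \<in> {1..H}" "H - h = n" using Suc.prems h_def by auto
  have ps: "prob_space (D h)" and int: "\<And>s a. integrable (D h) (\<lambda>R. R s a)"
    and mean: "\<And>s a. (\<integral>R. R s a \<partial>D h) = r h s a"
    and sets: "sets (D h) = sets borel" and nn: "AE R in D h. \<forall>s a. 0 \<le> R s a"
    using D h(1) unfolding reward_dists_def by auto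
  interpret prob_space "D h" by (rule ps)
  define c where "c a = (\<Sum>s'\<in>UNIV. pmf (P h s a) s' * qval H P D \<pi> n s')" for a
  define cU where "cU a = (\<Sum>s'\<in>UNIV. pmf (P h s a) s' * Uv H P r n s')" for a
  define f where "f R = (\<Sum>a\<in>UNIV. pmf (\<pi> h s R) a * (R s a + c a))" for R
  have IH: "\<And>s'. qval H P D \<pi> n s' \<le> Uv H P r n s'" using Suc by auto
  have pm: "(\<lambda>R. pmf (\<pi> h s R) a) \<in> borel_measurable borel" for a
    using pi h(1) unfolding Pi1_def by auto
  have "f \<in> borel_measurable borel"
    unfolding f_def
    by (intro borel_measurable_sum borel_measurable_times borel_measurable_add pm coord_meas
        borel_measurable_const)
  then have fm: "f \<in> borel_measurable (D h)"
    unfolding measurable_cong_sets[OF sets refl] .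
  have cm: "(\<lambda>R. R s a) \<in> borel_measurable (D h)" for s a
    unfolding measurable_cong_sets[OF sets refl] by (rule coord_meas)
  define F where "F R = (\<Sum>a\<in>UNIV. \<bar>R s a\<bar> + \<bar>c a\<bar>)" for R
  have Fi: "integrable (D h) F"
    unfolding F_def by (intro Bochner_Integration.integrable_sum Bochner_Integration.integrable_add integrable_abs int) auto
  have fi: "integrable (D h) f"
  proof (rule Bochner_Integration.integrable_bound[OF Fi fm])
    show "AE x in D h. norm (f x) \<le> norm (F x)"
    proof (rule AE_I2)
      fix R
      have "\<bar>f R\<bar> \<le> F R" unfolding f_def F_def
        by (rule abs_weighted_le) (auto simp: pmf_le_1)
      moreover have "0 \<le> F R" unfolding F_def by (intro sum_nonneg) auto
      ultimately show "norm (f R) \<le> norm (F R)" by simp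
    qed
  qed
  define G where "G R = (\<Sum>a\<in>UNIV. R s a) + Max (range c)" for R :: "('s,'a) rvec"
  have Gi: "integrable (D h) G" unfolding G_def by (intro Bochner_Integration.integrable_sum Bochner_Integration.integrable_add int) auto
  have "qval H P D \<pi> (Suc n) s = integral\<^sup>L (D h) f"
    unfolding f_def[abs_def] c_def by (simp add: h_def[symmetric] Let_def)
  also have "\<dots> \<le> integral\<^sup>L (D h) G"
  proof (rule Bochner_Integration.integral_mono_AE[OF fi Gi])
    show "AE x in D h. f x \<le> G x" using nn
    proof (rule AE_mp[OF _ AE_I2], intro impI)
      fix R :: "('s,'a) rvec" assume "\<forall>s a. 0 \<le> R s a"
      then show "f R \<le> G R" unfolding f_def G_def
        by (intro weighted_le) (auto simp: sum_pmf_UNIV)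
    qed
  qed
  also have "\<dots> = (\<Sum>a\<in>UNIV. r h s a) + Max (range c)"
    unfolding G_def using int mean prob_space
    by (subst Bochner_Integration.integral_add) (auto simp: Bochner_Integration.integral_sum)
  also have "\<dots> \<le> (\<Sum>a\<in>UNIV. r h s a) + Max (range cU)"
  proof -
    have "c a \<le> cU a" for a unfolding c_def cU_def
      by (intro sum_mono mult_left_mono IH) auto
    then show ?thesis using Max_range_mono[of c cU] by simp
  qed
  also have "\<dots> = Uv H P r (Suc n) s" by (simp add: Let_def h_def[symmetric] cU_def)
  finally show ?case .
qed


lemma Vv_nonneg:
  assumes nonneg: "\<forall>h\<in>{1..H}. \<forall>s a. 0 \<le> r h s a"
  shows "n \<le> H \<Longrightarrow> 0 \<le> Vv H P r n s"
proof (induction n arbitrary: s)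
  case 0 thus ?case by simp
next
  case (Suc n)
  define h where "h = H - n"
  have h: "h \<in> {1..H}" using Suc.prems h_def by auto
  define g where "g a = r h s a + (\<Sum>s'\<in>UNIV. pmf (P h s a) s' * Vv H P r n s')" for a
  have "0 \<le> g a" for a unfolding g_def
    using Suc nonneg h by (intro add_nonneg_nonneg sum_nonneg mult_nonneg_nonneg) auto
  also have "g a \<le> Max (range g)" for a by (rule Max_range_ge)
  finally have "0 \<le> Max (range g)" by blast
  then show ?case by (simp add: Let_def h_def[symmetric] g_def[abs_def])
qed

lemma Uv_le:
  fixes P :: "nat \<Rightarrow> 's::finite \<Rightarrow> 'a::finite \<Rightarrow> 's pmf"
  assumes nonneg: "\<forall>h\<in>{1..H}. \<forall>s a. 0 \<le> r h s a"
    and C1: "1 \<le> C"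
    and cond: "\<forall>h\<in>{1..H}. \<forall>s. (\<exists>a. 0 < r h s a) \<longrightarrow>
           (0 < Min (range (r h s)) \<and> Max (range (r h s)) / Min (range (r h s)) \<le> C)"
  shows "n \<le> H \<Longrightarrow> Uv H P r n s \<le> real CARD('a) * C * Vv H P r n s"
proof (induction n arbitrary: s)
  case 0 thus ?case by simp
next
  case (Suc n)
  define K where "K = real CARD('a) * C"
  have K0: "0 \<le> K" unfolding K_def using C1 by simp
  define h where "h = H - n"
  have h: "h \<in> {1..H}" using Suc.prems h_def by auto
  define cU where "cU a = (\<Sum>s'\<in>UNIV. pmf (P h s a) s' * Uv H P r n s')" for a
  define cV where "cV a = (\<Sum>s'\<in>UNIV. pmf (P h s a) s' * Vv H P r n s')" for a
  define M where "M = Max (range cV)"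
  define m where "m = Min (range (r h s))"
  have IH: "Uv H P r n s' \<le> K * Vv H P r n s'" for s' using Suc K_def by auto
  have "cU a \<le> K * cV a" for a
  proof -
    have "cU a \<le> (\<Sum>s'\<in>UNIV. pmf (P h s a) s' * (K * Vv H P r n s'))"
      unfolding cU_def by (intro sum_mono mult_left_mono IH) auto
    also have "\<dots> = K * cV a" unfolding cV_def by (simp add: sum_distrib_left algebra_simps)
    finally show ?thesis .
  qed
  then have "cU a \<le> K * M" for a
    using mult_left_mono[OF Max_range_ge[of cV a] K0] unfolding M_def by (meson order_trans)
  then have MU: "Max (range cU) \<le> K * M" by (simp add: Max_le_iff)
  have "M \<in> range cV" unfolding M_def by (intro Max_in) auto
  then obtain a1 where a1: "cV a1 = M" by (metis imageE)
  have m_le: "m \<le> r h s a" for a unfolding m_def by (rule Min_le) auto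
  have "m \<in> range (r h s)" unfolding m_def by (intro Min_in) auto
  then obtain a2 where a2: "r h s a2 = m" by (metis imageE)
  have m0: "0 \<le> m" using a2 nonneg h by metis
  have sumr: "(\<Sum>a\<in>UNIV. r h s a) \<le> K * m"
  proof (cases "\<exists>a. 0 < r h s a")
    case True
    then have mpos: "0 < m" and q: "Max (range (r h s)) / m \<le> C" using cond h m_def by auto
    have mx: "Max (range (r h s)) \<le> C * m" using q mpos by (simp add: divide_simps)
    have "(\<Sum>a\<in>UNIV. r h s a) \<le> (\<Sum>a\<in>(UNIV::'a set). C * m)"
      by (rule sum_mono) (meson Max_range_ge mx order_trans)
    also have "\<dots> = K * m" by (simp add: K_def)
    finally show ?thesis .
  next
    case False
    then have "r h s a = 0" for a using nonneg h by (meson linorder_not_le order_antisym)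
    then show ?thesis using K0 m0 by simp
  qed
  have "Vv H P r (Suc n) s = Max (range (\<lambda>a. r h s a + cV a))"
    by (simp add: Let_def h_def[symmetric] cV_def)
  also have "\<dots> \<ge> r h s a1 + cV a1" by (rule Max_range_ge)
  finally have VS: "m + M \<le> Vv H P r (Suc n) s" using m_le[of a1] a1 by linarith
  have "Uv H P r (Suc n) s = (\<Sum>a\<in>UNIV. r h s a) + Max (range cU)"
    by (simp add: Let_def h_def[symmetric] cU_def)
  also have "\<dots> \<le> K * m + K * M" using sumr MU by linarith
  also have "\<dots> = K * (m + M)" by (simp add: algebra_simps)
  also have "\<dots> \<le> K * Vv H P r (Suc n) s" using mult_left_mono[OF VS K0] .
  finally show ?case unfolding K_def .
qed


theorem mainTheorem9:
  fixes H :: nat and \<mu> :: "'s::finite pmf" and P :: "nat \<Rightarrow> 's \<Rightarrow> 'a::finite \<Rightarrow> 's pmf"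
    and r :: "nat \<Rightarrow> 's \<Rightarrow> 'a \<Rightarrow> real" and C :: real
  assumes "\<forall>h\<in>{1..H}. \<forall>s a. 0 \<le> r h s a"
    and "1 \<le> C"
    and "\<forall>h\<in>{1..H}. \<forall>s. (\<exists>a. 0 < r h s a) \<longrightarrow>
           (0 < Min (range (r h s)) \<and> Max (range (r h s)) / Min (range (r h s)) \<le> C)"
  shows "CR1 H \<mu> P r \<ge> ereal (1 / (real CARD('a) * C))"
  unfolding CR1_def
proof (rule INF_greatest)
  fix D assume D: "D \<in> reward_dists H r"
  define K where "K = real CARD('a) * C"
  have K1: "1 \<le> K" unfolding K_def using assms(2)
  proof -
    have "0 < CARD('a)" by (rule finite_UNIV_card_ge_0) simp
    then have "1 \<le> real CARD('a)" by simp
    then show "1 \<le> real CARD('a) * C" using assms(2) mult_mono[of 1 "real CARD('a)" 1 C] by simp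
  qed
  define \<pi>0 where "\<pi>0 = (pol H P r :: ('s,'a) lpolicy)"
  have pi0: "\<pi>0 \<in> Pi0 H" unfolding Pi0_def Pi1_def \<pi>0_def by (simp add: pol_def)
  have P01: "Pi0 H \<subseteq> (Pi1 H :: ('s,'a) lpolicy set)" unfolding Pi0_def by auto
  define Bv where "Bv = (\<Sum>s\<in>UNIV. pmf \<mu> s * Uv H P r H s)"
  have pvB: "policy_value H \<mu> P D \<pi> \<le> Bv" if "\<pi> \<in> Pi1 H" for \<pi>
    unfolding policy_value_def Bv_def
    by (intro sum_mono mult_left_mono qval_le[OF D that]) auto
  have bdd1: "bdd_above (policy_value H \<mu> P D ` Pi1 H)" by (rule bdd_aboveI2[where M=Bv]) (rule pvB)
  have bdd0: "bdd_above (policy_value H \<mu> P D ` Pi0 H)"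
    by (rule bdd_above_mono[OF bdd1]) (rule image_mono[OF P01])
  define v0 where "v0 = opt_value H \<mu> P D (Pi0 H :: ('s,'a) lpolicy set)"
  define v1 where "v1 = opt_value H \<mu> P D (Pi1 H :: ('s,'a) lpolicy set)"
  have v1B: "v1 \<le> Bv" unfolding v1_def opt_value_def
    using pi0 P01 pvB by (intro cSUP_least) auto
  have pv0: "policy_value H \<mu> P D \<pi>0 = (\<Sum>s\<in>UNIV. pmf \<mu> s * Vv H P r H s)"
    unfolding policy_value_def \<pi>0_def using qval_pol[OF D] by simp
  have "Bv \<le> (\<Sum>s\<in>UNIV. pmf \<mu> s * (K * Vv H P r H s))"
    unfolding Bv_def K_def using Uv_le[OF assms] by (intro sum_mono mult_left_mono) auto
  also have "\<dots> = K * policy_value H \<mu> P D \<pi>0" unfolding pv0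
    by (simp add: sum_distrib_left algebra_simps)
  also have "policy_value H \<mu> P D \<pi>0 \<le> v0" unfolding v0_def opt_value_def
    using pi0 bdd0 by (intro cSUP_upper) auto
  finally have "Bv \<le> K * v0" using K1 by (simp add: mult_left_mono)
  then have v1v0: "v1 \<le> K * v0" using v1B by linarith
  have "0 \<le> policy_value H \<mu> P D \<pi>0" unfolding pv0
    using Vv_nonneg[OF assms(1)] by (intro sum_nonneg mult_nonneg_nonneg) auto
  also have "policy_value H \<mu> P D \<pi>0 \<le> v1" unfolding v1_def opt_value_def
    using pi0 P01 bdd1 by (intro cSUP_upper) auto
  finally have v1nn: "0 \<le> v1" .
  show "ereal (1 / (real CARD('a) * C)) \<le>
      (let v0 = opt_value H \<mu> P D (Pi0 H :: ('s,'a) lpolicy set);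
           v1 = opt_value H \<mu> P D (Pi1 H :: ('s,'a) lpolicy set)
       in if v1 = 0 then \<infinity> else ereal (v0 / v1))"
  proof (cases "v1 = 0")
    case True then show ?thesis unfolding Let_def v1_def by simp
  next
    case False
    then have "0 < v1" using v1nn by simp
    then have "1 / K \<le> v0 / v1" using v1v0 K1 by (simp add: divide_simps mult.commute)
    then show ?thesis using False unfolding Let_def v0_def[symmetric] v1_def[symmetric] K_def
      by simp
  qed
qed

end
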